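(* Let $\mathcal Z,\mathcal Z'$ be measurable spaces, $M\ge2$, $K$ a characteristic kernel on $\{1,\ldots,M\}$, and fixed mixture proportions $\pi_1,\ldots,\pi_M\in(0,1)$ with $\sum_i\pi_i=1$. Let $\kappa$ be a transition kernel from $\mathcal Z$ to $\mathcal Z'$ (for each $z\in\mathcal Z$, $\kappa(z,\cdot)$ is a probability measure on $\mathcal Z'$, and $z\mapsto\kappa(z,B)$ is measurable). Let $P_1,\dots,P_M$ be probability measures on $\mathcal Z$ and define $Q_i(B)=\int\kappa(z,B)\,dP_i(z)$ for measurable $B\subset\mathcal Z'$. Then $$\eta(P_1,\ldots,P_M)\ge\eta(Q_1,\ldots,Q_M).$$ Moreover, let $(\tilde Z,\tilde\Delta)$ be such that $\mathbb P(\tilde\Delta=i)=\pi_i$ and $\tilde Z\mid\tilde\Delta=i\sim P_i$, and given $(\tilde Z,\tilde\Delta)$ draw $\tilde Z'\sim\kappa(\tilde Z,\cdot)$. Then equality holds if and only if the conditional distribution of $\tilde\Delta$ given $\tilde Z$ coincides with the conditional distribution of $\tilde\Delta$ given $\tilde Z'$ (i.e. $\mathbb P(\tilde\Delta=i\mid\tilde Z)=\mathbb P(\tilde\Delta=i\mid\tilde Z')$ a.s. for all $i$). In particular, if $T:\mathcal Z\to\mathcal Z'$ is a measurable bijection and $Q_i$ is the law of $T(Y)$ for $Y\sim P_i$, then $\eta(P_1,\ldots,P_M)=\eta(Q_1,\ldots,Q_M)$.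
   Context: A kernel on $\mathcal S=\{1,\ldots,M\}$ is a symmetric $K:\mathcal S^2\to\mathbb R$ with $[K(i,j)]$ positive semidefinite; it is characteristic if $\sum_{i,j}\alpha_i\alpha_jK(i,j)>0$ for every nonzero $\alpha\in\mathbb R^M$ with $\sum\alpha_i=0$. For probability measures $R_1,\dots,R_M$ on a measurable space, the KMD is defined as follows: let $(\tilde Z,\tilde\Delta)$ have $\mathbb P(\tilde\Delta=i)=\pi_i$ and $\tilde Z\mid\tilde\Delta=i\sim R_i$; let $(\tilde Z_1,\tilde\Delta_1),(\tilde Z_2,\tilde\Delta_2)$ be i.i.d. copies; let $\tilde\Delta'$ satisfy $(\tilde Z,\tilde\Delta')\overset d=(\tilde Z,\tilde\Delta)$ with $\tilde\Delta,\tilde\Delta'$ conditionally independent given $\tilde Z$. Then $$\eta(R_1,\ldots,R_M)=\frac{\mathbb E[K(\tilde\Delta,\tilde\Delta')]-\mathbb E[K(\tilde\Delta_1,\tilde\Delta_2)]}{\mathbb E[K(\tilde\Delta,\tilde\Delta)]-\mathbb E[K(\tilde\Delta_1,\tilde\Delta_2)]}.$$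
   Formalization: In the closing claim the measurable bijection T also has a measurable inverse from $\mathcal Z'$ to $\mathcal Z$. The statement above fails without it. *)

theory Defs
  imports "HOL-Probability.Probability"
begin

definition char_kernel :: "nat \<Rightarrow> (nat \<Rightarrow> nat \<Rightarrow> real) \<Rightarrow> bool" where
  "char_kernel M K \<longleftrightarrow>
     (\<forall>i\<in>{1..M}. \<forall>j\<in>{1..M}. K i j = K j i) \<and>
     (\<forall>\<alpha>::nat \<Rightarrow> real. (\<Sum>i\<in>{1..M}. \<Sum>j\<in>{1..M}. \<alpha> i * \<alpha> j * K i j) \<ge> 0) \<and>
     (\<forall>\<alpha>::nat \<Rightarrow> real. (\<Sum>i\<in>{1..M}. \<alpha> i) = 0 \<and> (\<exists>i\<in>{1..M}. \<alpha> i \<noteq> 0) \<longrightarrow>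
        (\<Sum>i\<in>{1..M}. \<Sum>j\<in>{1..M}. \<alpha> i * \<alpha> j * K i j) > 0)"

definition transition_kernel :: "'a measure \<Rightarrow> 'b measure \<Rightarrow> ('a \<Rightarrow> 'b measure) \<Rightarrow> bool" where
  "transition_kernel X Y \<kappa> \<longleftrightarrow>
     (\<forall>z\<in>space X. prob_space (\<kappa> z) \<and> sets (\<kappa> z) = sets Y) \<and>
     (\<forall>B\<in>sets Y. (\<lambda>z. emeasure (\<kappa> z) B) \<in> borel_measurable X)"

definition mixture :: "nat \<Rightarrow> (nat \<Rightarrow> real) \<Rightarrow> 'a measure \<Rightarrow> (nat \<Rightarrow> 'a measure) \<Rightarrow> 'a measure" where
  "mixture M \<pi> X R =
     measure_of (space X) (sets X) (\<lambda>A. \<Sum>i\<in>{1..M}. ennreal (\<pi> i) * emeasure (R i) A)"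

text \<open>Posterior P(Delta~ = i | Z~ = z) = pi_i dR_i / d(mixture) (z).\<close>
definition posterior :: "nat \<Rightarrow> (nat \<Rightarrow> real) \<Rightarrow> 'a measure \<Rightarrow> (nat \<Rightarrow> 'a measure) \<Rightarrow> nat \<Rightarrow> 'a \<Rightarrow> real" where
  "posterior M \<pi> X R i z = \<pi> i * enn2real (RN_deriv (mixture M \<pi> X R) (R i) z)"

text \<open>Since Delta~, Delta~' are conditionally independent given Z~ with
  the same conditional law, E[K(Delta~,Delta~')] = E[sum_ij K(i,j) p_i(Z~) p_j(Z~)];
  E[K(Delta~_1,Delta~_2)] = sum_ij pi_i pi_j K(i,j); E[K(Delta~,Delta~)] = sum_i pi_i K(i,i).\<close>
definition kmd :: "nat \<Rightarrow> (nat \<Rightarrow> nat \<Rightarrow> real) \<Rightarrow> (nat \<Rightarrow> real) \<Rightarrow> 'a measure \<Rightarrow> (nat \<Rightarrow> 'a measure) \<Rightarrow> real" where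
  "kmd M K \<pi> X R =
     (let cross = (\<Sum>i\<in>{1..M}. \<Sum>j\<in>{1..M}. \<pi> i * \<pi> j * K i j);
          same = (\<integral>z. (\<Sum>i\<in>{1..M}. \<Sum>j\<in>{1..M}.
                     K i j * posterior M \<pi> X R i z * posterior M \<pi> X R j z) \<partial>mixture M \<pi> X R);
          diag = (\<Sum>i\<in>{1..M}. \<pi> i * K i i)
      in (same - cross) / (diag - cross))"

definition joint_law :: "nat \<Rightarrow> (nat \<Rightarrow> real) \<Rightarrow> 'a measure \<Rightarrow> 'b measure \<Rightarrow> (nat \<Rightarrow> 'a measure)
    \<Rightarrow> ('a \<Rightarrow> 'b measure) \<Rightarrow> ('a \<times> 'b) measure" where
  "joint_law M \<pi> X Y P \<kappa> =
     mixture M \<pi> X P \<bind> (\<lambda>z. distr (\<kappa> z) (X \<Otimes>\<^sub>M Y) (\<lambda>z'. (z, z')))"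

end

theory Submission
  imports Defs
begin

abbreviation Dm :: "nat \<Rightarrow> (nat \<Rightarrow> real) \<Rightarrow> nat measure" where "Dm M \<pi> \<equiv> density (count_space {1..M}) (\<lambda>i. ennreal (\<pi> i))"

lemma R_meas:
  assumes "\<forall>i\<in>{1..M}. prob_space (R i) \<and> sets (R i) = sets X"
  shows "R \<in> measurable (Dm M \<pi>) (subprob_algebra X)"
proof -
  have "R \<in> measurable (count_space {1..M}) (subprob_algebra X)"
    unfolding measurable_count_space_eq1 using assms
    by (auto simp: space_subprob_algebra prob_space_imp_subprob_space)
  then show ?thesis by (subst measurable_cong_sets[OF sets_density refl])
qed

lemma emeasure_Dm_bind:
  assumes "M \<ge> 1" "\<forall>i\<in>{1..M}. prob_space (R i) \<and> sets (R i) = sets X" "\<forall>i\<in>{1..M}. 0 \<le> \<pi> i"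
    and A: "A \<in> sets X"
  shows "emeasure (Dm M \<pi> \<bind> R) A = (\<Sum>i\<in>{1..M}. ennreal (\<pi> i) * emeasure (R i) A)"
proof -
  have "emeasure (Dm M \<pi> \<bind> R) A = (\<integral>\<^sup>+i. emeasure (R i) A \<partial>Dm M \<pi>)"
  proof (rule emeasure_bind[OF _ R_meas[OF assms(2)] A])
    have "1 \<in> {1..M}" using assms(1) by simp
    then show "space (Dm M \<pi>) \<noteq> {}" by auto
  qed
  also have "\<dots> = (\<integral>\<^sup>+i. ennreal (\<pi> i) * emeasure (R i) A \<partial>count_space {1..M})"
    by (subst nn_integral_density) auto
  also have "\<dots> = (\<Sum>i\<in>{1..M}. ennreal (\<pi> i) * emeasure (R i) A)"
    by (subst nn_integral_count_space_finite) auto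
  finally show ?thesis .
qed

lemma mixture_bind:
  assumes "M \<ge> 1" "\<forall>i\<in>{1..M}. prob_space (R i) \<and> sets (R i) = sets X" "\<forall>i\<in>{1..M}. 0 \<le> \<pi> i"
  shows "mixture M \<pi> X R = Dm M \<pi> \<bind> R"
proof -
  have "1 \<in> {1..M}" using assms(1) by simp
  then have ne: "space (Dm M \<pi>) \<noteq> {}" by auto
  have sb: "sets (Dm M \<pi> \<bind> R) = sets X"
    using assms(2) by (intro sets_bind[OF _ ne]) auto
  have sp: "space (Dm M \<pi> \<bind> R) = space X" using sets_eq_imp_space_eq[OF sb] .
  have "mixture M \<pi> X R = measure_of (space X) (sets X) (emeasure (Dm M \<pi> \<bind> R))"
    unfolding mixture_def
    apply (rule measure_of_eq)
     apply (simp add: sets.space_closed)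
    apply (simp only: sets.sigma_sets_eq)
    apply (rule emeasure_Dm_bind[OF assms, symmetric])
    apply assumption
    done
  also have "\<dots> = Dm M \<pi> \<bind> R"
    by (metis measure_of_of_measure sb sp)
  finally show ?thesis .
qed


locale mixs =
  fixes M :: nat and \<pi> :: "nat \<Rightarrow> real" and X :: "'a measure" and R :: "nat \<Rightarrow> 'a measure"
  assumes M1: "M \<ge> 1"
    and R: "\<forall>i\<in>{1..M}. prob_space (R i) \<and> sets (R i) = sets X"
    and pi_pos: "\<forall>i\<in>{1..M}. 0 < \<pi> i"
    and pi_sum: "(\<Sum>i\<in>{1..M}. \<pi> i) = 1"
begin

abbreviation "mu \<equiv> mixture M \<pi> X R"
abbreviation "p \<equiv> posterior M \<pi> X R"

lemma pi_nn: "\<forall>i\<in>{1..M}. 0 \<le> \<pi> i" using pi_pos by auto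

lemma mu_bind: "mu = Dm M \<pi> \<bind> R"
  using mixture_bind[OF M1 R pi_nn] .

lemma ne: "space (Dm M \<pi>) \<noteq> {}"
proof -
  have "1 \<in> {1..M}" using M1 by simp
  then show ?thesis by auto
qed

lemma sets_mu[simp, measurable_cong]: "sets mu = sets X"
  unfolding mu_bind using R by (intro sets_bind[OF _ ne]) auto

lemma space_mu[simp]: "space mu = space X"
  using sets_eq_imp_space_eq[OF sets_mu] .

lemma meas_mu[simp]: "measurable mu N = measurable X N"
  by (rule measurable_cong_sets[OF sets_mu refl])

lemma emeasure_mu: "A \<in> sets X \<Longrightarrow> emeasure mu A = (\<Sum>i\<in>{1..M}. ennreal (\<pi> i) * emeasure (R i) A)"
  unfolding mu_bind by (rule emeasure_Dm_bind[OF M1 R pi_nn])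

lemma nn_integral_mu:
  assumes f: "f \<in> borel_measurable X"
  shows "(\<integral>\<^sup>+z. f z \<partial>mu) = (\<Sum>i\<in>{1..M}. ennreal (\<pi> i) * (\<integral>\<^sup>+z. f z \<partial>R i))"
proof -
  have "(\<integral>\<^sup>+z. f z \<partial>mu) = (\<integral>\<^sup>+i. (\<integral>\<^sup>+z. f z \<partial>R i) \<partial>Dm M \<pi>)"
    unfolding mu_bind by (rule nn_integral_bind[OF f R_meas[OF R]])
  also have "\<dots> = (\<integral>\<^sup>+i. ennreal (\<pi> i) * (\<integral>\<^sup>+z. f z \<partial>R i) \<partial>count_space {1..M})"
    by (subst nn_integral_density) auto
  also have "\<dots> = (\<Sum>i\<in>{1..M}. ennreal (\<pi> i) * (\<integral>\<^sup>+z. f z \<partial>R i))"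
    by (subst nn_integral_count_space_finite) auto
  finally show ?thesis .
qed

lemma prob_mu: "prob_space mu"
proof
  have "emeasure mu (space mu) = (\<Sum>i\<in>{1..M}. ennreal (\<pi> i) * emeasure (R i) (space X))"
    by (simp add: emeasure_mu)
  also have "\<dots> = (\<Sum>i\<in>{1..M}. ennreal (\<pi> i))"
  proof (rule sum.cong[OF refl])
    fix i assume i: "i \<in> {1..M}"
    then interpret prob_space "R i" using R by auto
    have "space X = space (R i)" using R i by (metis sets_eq_imp_space_eq)
    then show "ennreal (\<pi> i) * emeasure (R i) (space X) = ennreal (\<pi> i)" by (simp add: emeasure_space_1)
  qed
  also have "\<dots> = 1" by (subst sum_ennreal) (use pi_nn pi_sum in auto)
  finally show "emeasure mu (space mu) = 1" .
qed

sublocale mu: prob_space mu by (rule prob_mu)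

lemma ac: "i \<in> {1..M} \<Longrightarrow> absolutely_continuous mu (R i)"
proof (unfold absolutely_continuous_def, safe)
  fix i A assume i: "i \<in> {1..M}" and A: "A \<in> null_sets mu"
  then have As: "A \<in> sets X" by auto
  have "emeasure mu A = 0" using A by auto
  then have "(\<Sum>j\<in>{1..M}. ennreal (\<pi> j) * emeasure (R j) A) = 0"
    by (simp only: emeasure_mu[OF As])
  then have "ennreal (\<pi> i) * emeasure (R i) A = 0" using i by (subst (asm) sum_eq_0_iff) auto
  moreover have "0 < \<pi> i" using pi_pos i by auto
  ultimately have "emeasure (R i) A = 0" by auto
  then show "A \<in> null_sets (R i)" using As R i by auto
qed

lemma RN_fin: "i \<in> {1..M} \<Longrightarrow> AE z in mu. RN_deriv mu (R i) z \<noteq> \<infinity>"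
proof -
  assume i: "i \<in> {1..M}"
  then interpret Ri: prob_space "R i" using R by auto
  show ?thesis by (rule mu.RN_deriv_finite) (use ac[OF i] R i in \<open>auto intro: Ri.sigma_finite_measure\<close>)
qed

lemma p_meas[measurable]: "p i \<in> borel_measurable X"
proof -
  have "(\<lambda>z. \<pi> i * enn2real (RN_deriv mu (R i) z)) \<in> borel_measurable mu" by measurable
  then show ?thesis unfolding posterior_def by (simp add: meas_mu)
qed

lemma p_nonneg: "i \<in> {1..M} \<Longrightarrow> 0 \<le> p i z"
proof -
  assume "i \<in> {1..M}"
  then have "0 < \<pi> i" using pi_pos by auto
  then show ?thesis by (simp add: posterior_def)
qed

lemma p_ennreal: assumes i: "i \<in> {1..M}" shows "AE z in mu. ennreal (p i z) = ennreal (\<pi> i) * RN_deriv mu (R i) z"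
proof -
  have pi0: "0 \<le> \<pi> i" using pi_nn i by auto
  show ?thesis
    using RN_fin[OF i] by eventually_elim (simp add: posterior_def ennreal_mult pi0 top.not_eq_extremum)
qed

lemma nn_integral_p:
  assumes i: "i \<in> {1..M}" and f: "f \<in> borel_measurable X"
  shows "(\<integral>\<^sup>+z. ennreal (p i z) * f z \<partial>mu) = ennreal (\<pi> i) * (\<integral>\<^sup>+z. f z \<partial>R i)"
proof -
  have "(\<integral>\<^sup>+z. ennreal (p i z) * f z \<partial>mu) = (\<integral>\<^sup>+z. ennreal (\<pi> i) * (RN_deriv mu (R i) z * f z) \<partial>mu)"
    using p_ennreal[OF i] by (intro nn_integral_cong_AE) (auto simp: mult.assoc)
  also have "\<dots> = ennreal (\<pi> i) * (\<integral>\<^sup>+z. RN_deriv mu (R i) z * f z \<partial>mu)"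
    using f by (intro nn_integral_cmult) (simp add: meas_mu)
  also have "(\<integral>\<^sup>+z. RN_deriv mu (R i) z * f z \<partial>mu) = (\<integral>\<^sup>+z. f z \<partial>R i)"
    using ac[OF i] R i f by (intro mu.RN_deriv_nn_integral[symmetric]) (auto simp: meas_mu)
  finally show ?thesis .
qed

lemma p_sum: "AE z in mu. (\<Sum>i\<in>{1..M}. p i z) = 1"
proof -
  let ?g = "\<lambda>z. ennreal (\<Sum>i\<in>{1..M}. p i z)"
  have gm: "?g \<in> borel_measurable mu" by (simp add: meas_mu)
  have "density mu ?g = mu"
  proof (rule measure_eqI)
    fix A assume "A \<in> sets (density mu ?g)"
    then have A: "A \<in> sets X" by simp
    have "emeasure (density mu ?g) A = (\<integral>\<^sup>+z. ?g z * indicator A z \<partial>mu)"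
      using A gm by (intro emeasure_density) auto
    also have "\<dots> = (\<integral>\<^sup>+z. (\<Sum>i\<in>{1..M}. ennreal (p i z) * indicator A z) \<partial>mu)"
    proof (intro nn_integral_cong)
      fix z
      have "(\<Sum>i\<in>{1..M}. ennreal (p i z)) = ennreal (\<Sum>i\<in>{1..M}. p i z)"
        by (rule sum_ennreal) (rule p_nonneg)
      then show "?g z * indicator A z = (\<Sum>i\<in>{1..M}. ennreal (p i z) * indicator A z)"
        by (simp add: sum_distrib_right[symmetric])
    qed
    also have "\<dots> = (\<Sum>i\<in>{1..M}. (\<integral>\<^sup>+z. ennreal (p i z) * indicator A z \<partial>mu))"
      using A by (intro nn_integral_sum) (simp add: meas_mu)
    also have "\<dots> = (\<Sum>i\<in>{1..M}. ennreal (\<pi> i) * emeasure (R i) A)"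
    proof (rule sum.cong[OF refl])
      fix i assume i: "i \<in> {1..M}"
      have "(\<integral>\<^sup>+z. ennreal (p i z) * indicator A z \<partial>mu) = ennreal (\<pi> i) * (\<integral>\<^sup>+z. indicator A z \<partial>R i)"
        using A by (intro nn_integral_p[OF i]) auto
      also have "(\<integral>\<^sup>+z. indicator A z \<partial>R i) = emeasure (R i) A"
        using A R i by (intro nn_integral_indicator) auto
      finally show "(\<integral>\<^sup>+z. ennreal (p i z) * indicator A z \<partial>mu) = ennreal (\<pi> i) * emeasure (R i) A" .
    qed
    also have "\<dots> = emeasure mu A" using emeasure_mu[OF A] by simp
    finally show "emeasure (density mu ?g) A = emeasure mu A" .
  qed simp
  then have "AE z in mu. ?g z = RN_deriv mu mu z" by (intro mu.RN_deriv_unique gm)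
  moreover have "AE z in mu. 1 = RN_deriv mu mu z" by (intro mu.RN_deriv_unique) (auto simp: density_1)
  ultimately show ?thesis by eventually_elim (simp add: p_nonneg sum_nonneg)
qed

lemma p_le1: "i \<in> {1..M} \<Longrightarrow> AE z in mu. p i z \<le> 1"
  using p_sum
proof eventually_elim
  fix z assume "(\<Sum>i\<in>{1..M}. p i z) = 1" and i: "i \<in> {1..M}"
  then show "p i z \<le> 1"
    using member_le_sum[of i "{1..M}" "\<lambda>i. p i z"] p_nonneg by auto
qed

end


lemma (in prob_space) integrable_bdd:
  fixes f :: "_ \<Rightarrow> real"
  assumes "f \<in> borel_measurable M" "AE x in M. \<bar>f x\<bar> \<le> C"
  shows "integrable M f"
proof -
  have "integrable M (\<lambda>_. C)" by simp
  then show ?thesis by (rule Bochner_Integration.integrable_bound) (use assms in \<open>auto elim!: eventually_mono\<close>)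
qed

lemma (in prob_space) integrable_prod3:
  fixes x y :: "_ \<Rightarrow> real"
  assumes "x \<in> borel_measurable M" "y \<in> borel_measurable M"
    "AE w in M. \<bar>x w\<bar> \<le> 1" "AE w in M. \<bar>y w\<bar> \<le> 1"
  shows "integrable M (\<lambda>w. c * x w * y w)"
proof (rule integrable_bdd[where C="\<bar>c\<bar>"])
  show "(\<lambda>w. c * x w * y w) \<in> borel_measurable M" using assms by measurable
  show "AE w in M. \<bar>c * x w * y w\<bar> \<le> \<bar>c\<bar>"
    using assms(3,4)
  proof eventually_elim
    fix w assume h: "\<bar>x w\<bar> \<le> 1" "\<bar>y w\<bar> \<le> 1"
    have "\<bar>x w * y w\<bar> \<le> 1" using h by (simp add: abs_mult mult_le_one)
    then show "\<bar>c * x w * y w\<bar> \<le> \<bar>c\<bar>"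
      by (simp add: abs_mult mult.assoc mult_left_le)
  qed
qed

definition qf :: "nat \<Rightarrow> (nat \<Rightarrow> nat \<Rightarrow> real) \<Rightarrow> (nat \<Rightarrow> real) \<Rightarrow> real" where
  "qf M K v = (\<Sum>i\<in>{1..M}. \<Sum>j\<in>{1..M}. K i j * v i * v j)"

lemma qf_alt: "qf M K v = (\<Sum>i\<in>{1..M}. \<Sum>j\<in>{1..M}. v i * v j * K i j)"
  unfolding qf_def by (intro sum.cong refl) (simp add: ac_simps)

lemma qf_nonneg: "char_kernel M K \<Longrightarrow> 0 \<le> qf M K v"
  unfolding char_kernel_def qf_alt by blast

lemma qf_expand:
  assumes K: "char_kernel M K"
  shows "qf M K (\<lambda>i. b i + d i) = qf M K b + 2 * (\<Sum>i\<in>{1..M}. \<Sum>j\<in>{1..M}. K i j * d i * b j) + qf M K d"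
proof -
  have sym: "\<And>i j. i \<in> {1..M} \<Longrightarrow> j \<in> {1..M} \<Longrightarrow> K i j = K j i"
    using K unfolding char_kernel_def by blast
  have swap: "(\<Sum>i\<in>{1..M}. \<Sum>j\<in>{1..M}. K i j * b i * d j) = (\<Sum>i\<in>{1..M}. \<Sum>j\<in>{1..M}. K i j * d i * b j)"
    by (subst sum.swap) (auto intro!: sum.cong simp: sym)
  have "qf M K (\<lambda>i. b i + d i) = (\<Sum>i\<in>{1..M}. \<Sum>j\<in>{1..M}.
      K i j * b i * b j + K i j * b i * d j + K i j * d i * b j + K i j * d i * d j)"
    unfolding qf_def by (intro sum.cong refl) (simp add: ring_distribs)
  also have "\<dots> = qf M K b + (\<Sum>i\<in>{1..M}. \<Sum>j\<in>{1..M}. K i j * b i * d j)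
      + (\<Sum>i\<in>{1..M}. \<Sum>j\<in>{1..M}. K i j * d i * b j) + qf M K d"
    unfolding qf_def by (simp add: sum.distrib)
  finally show ?thesis using swap by simp
qed

lemma qf_pos:
  assumes K: "char_kernel M K" and s: "(\<Sum>i\<in>{1..M}. v i) = 0" and q: "qf M K v = 0"
  shows "\<forall>i\<in>{1..M}. v i = 0"
proof (rule ccontr)
  assume "\<not> (\<forall>i\<in>{1..M}. v i = 0)"
  then have "\<exists>i\<in>{1..M}. v i \<noteq> 0" by blast
  then have "0 < (\<Sum>i\<in>{1..M}. \<Sum>j\<in>{1..M}. v i * v j * K i j)"
    using K s unfolding char_kernel_def by blast
  then show False using q unfolding qf_alt by simp
qed

lemma core:
  fixes J :: "'c measure" and a b :: "nat \<Rightarrow> 'c \<Rightarrow> real"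
  assumes J: "prob_space J" and K: "char_kernel M K"
    and am: "\<forall>i\<in>{1..M}. a i \<in> borel_measurable J"
    and bm: "\<forall>i\<in>{1..M}. b i \<in> borel_measurable J"
    and ab: "\<forall>i\<in>{1..M}. AE w in J. 0 \<le> a i w \<and> a i w \<le> 1"
    and bb: "\<forall>i\<in>{1..M}. AE w in J. 0 \<le> b i w \<and> b i w \<le> 1"
    and asum: "AE w in J. (\<Sum>i\<in>{1..M}. a i w) = 1"
    and bsum: "AE w in J. (\<Sum>i\<in>{1..M}. b i w) = 1"
    and cross: "\<forall>i\<in>{1..M}. \<forall>j\<in>{1..M}. (\<integral>w. a i w * b j w \<partial>J) = (\<integral>w. b i w * b j w \<partial>J)"
  shows "(\<integral>w. qf M K (\<lambda>i. b i w) \<partial>J) \<le> (\<integral>w. qf M K (\<lambda>i. a i w) \<partial>J)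
    \<and> ((\<integral>w. qf M K (\<lambda>i. a i w) \<partial>J) = (\<integral>w. qf M K (\<lambda>i. b i w) \<partial>J)
          \<longleftrightarrow> (\<forall>i\<in>{1..M}. AE w in J. a i w = b i w))"
proof -
  interpret prob_space J by fact
  define d where "d i w = a i w - b i w" for i w
  have dm: "\<forall>i\<in>{1..M}. d i \<in> borel_measurable J" using am bm unfolding d_def by (auto intro!: borel_measurable_diff)
  have a1: "\<forall>i\<in>{1..M}. AE w in J. \<bar>a i w\<bar> \<le> 1"
  proof
    fix i assume i: "i \<in> {1..M}" show "AE w in J. \<bar>a i w\<bar> \<le> 1" using ab[rule_format, OF i] by eventually_elim auto
  qed
  have b1: "\<forall>i\<in>{1..M}. AE w in J. \<bar>b i w\<bar> \<le> 1"
  proof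
    fix i assume i: "i \<in> {1..M}" show "AE w in J. \<bar>b i w\<bar> \<le> 1" using bb[rule_format, OF i] by eventually_elim auto
  qed
  have d1: "\<forall>i\<in>{1..M}. AE w in J. \<bar>d i w\<bar> \<le> 1"
  proof
    fix i assume i: "i \<in> {1..M}"
    show "AE w in J. \<bar>d i w\<bar> \<le> 1" using ab[rule_format, OF i] bb[rule_format, OF i]
      by eventually_elim (auto simp: d_def)
  qed
  have int: "integrable J (\<lambda>w. c * x i w * y j w)"
    if "x \<in> {a, b, d}" "y \<in> {a, b, d}" "i \<in> {1..M}" "j \<in> {1..M}" for x y i j c
    using that am bm dm a1 b1 d1 by (intro integrable_prod3) auto
  have intsum: "integrable J (\<lambda>w. \<Sum>i\<in>{1..M}. \<Sum>j\<in>{1..M}. K i j * x i w * y j w)"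
    if "x \<in> {a, b, d}" "y \<in> {a, b, d}" for x y
    using that by (intro Bochner_Integration.integrable_sum int) auto
  have isum: "(\<integral>w. (\<Sum>i\<in>{1..M}. \<Sum>j\<in>{1..M}. K i j * x i w * y j w) \<partial>J)
      = (\<Sum>i\<in>{1..M}. \<Sum>j\<in>{1..M}. K i j * (\<integral>w. x i w * y j w \<partial>J))"
    if "x \<in> {a, b, d}" "y \<in> {a, b, d}" for x y
  proof -
    have "(\<integral>w. (\<Sum>i\<in>{1..M}. \<Sum>j\<in>{1..M}. K i j * x i w * y j w) \<partial>J)
       = (\<Sum>i\<in>{1..M}. \<Sum>j\<in>{1..M}. (\<integral>w. K i j * x i w * y j w \<partial>J))"
      using that by (subst Bochner_Integration.integral_sum) (auto intro!: Bochner_Integration.integrable_sum int sum.cong Bochner_Integration.integral_sum)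
    also have "\<dots> = (\<Sum>i\<in>{1..M}. \<Sum>j\<in>{1..M}. K i j * (\<integral>w. x i w * y j w \<partial>J))"
      by (intro sum.cong refl) (simp add: mult.assoc)
    finally show ?thesis .
  qed
  have G0: "(\<integral>w. (\<Sum>i\<in>{1..M}. \<Sum>j\<in>{1..M}. K i j * d i w * b j w) \<partial>J) = 0"
  proof -
    have "\<And>i j. i \<in> {1..M} \<Longrightarrow> j \<in> {1..M} \<Longrightarrow> (\<integral>w. d i w * b j w \<partial>J) = 0"
    proof -
      fix i j assume i: "i \<in> {1..M}" and j: "j \<in> {1..M}"
      have "(\<integral>w. d i w * b j w \<partial>J) = (\<integral>w. 1 * a i w * b j w - 1 * b i w * b j w \<partial>J)"
        by (simp add: d_def algebra_simps)
      also have "\<dots> = (\<integral>w. 1 * a i w * b j w \<partial>J) - (\<integral>w. 1 * b i w * b j w \<partial>J)"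
        using i j by (intro Bochner_Integration.integral_diff int) auto
      also have "\<dots> = 0" using cross i j by simp
      finally show "(\<integral>w. d i w * b j w \<partial>J) = 0" .
    qed
    then show ?thesis by (subst isum) auto
  qed
  have expand: "qf M K (\<lambda>i. a i w) = qf M K (\<lambda>i. b i w)
      + 2 * (\<Sum>i\<in>{1..M}. \<Sum>j\<in>{1..M}. K i j * d i w * b j w) + qf M K (\<lambda>i. d i w)"
    for w using qf_expand[OF K, of "\<lambda>i. b i w" "\<lambda>i. d i w"] by (simp add: d_def)
  have qfint: "integrable J (\<lambda>w. qf M K (\<lambda>i. x i w))" if "x \<in> {a, b, d}" for x
    unfolding qf_def using intsum[OF that that] .
  have eq: "(\<integral>w. qf M K (\<lambda>i. a i w) \<partial>J) = (\<integral>w. qf M K (\<lambda>i. b i w) \<partial>J) + (\<integral>w. qf M K (\<lambda>i. d i w) \<partial>J)"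
  proof -
    have "(\<integral>w. qf M K (\<lambda>i. a i w) \<partial>J) = (\<integral>w. qf M K (\<lambda>i. b i w)
      + 2 * (\<Sum>i\<in>{1..M}. \<Sum>j\<in>{1..M}. K i j * d i w * b j w) + qf M K (\<lambda>i. d i w) \<partial>J)"
      by (simp only: expand)
    also have "\<dots> = (\<integral>w. qf M K (\<lambda>i. b i w) \<partial>J)
      + 2 * (\<integral>w. (\<Sum>i\<in>{1..M}. \<Sum>j\<in>{1..M}. K i j * d i w * b j w) \<partial>J) + (\<integral>w. qf M K (\<lambda>i. d i w) \<partial>J)"
      using qfint intsum by simp
    finally show ?thesis using G0 by simp
  qed
  have dnn: "0 \<le> (\<integral>w. qf M K (\<lambda>i. d i w) \<partial>J)"
    by (rule integral_nonneg_AE) (simp add: qf_nonneg[OF K])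
  have iff: "(\<integral>w. qf M K (\<lambda>i. d i w) \<partial>J) = 0 \<longleftrightarrow> (\<forall>i\<in>{1..M}. AE w in J. a i w = b i w)"
  proof -
    have "(\<integral>w. qf M K (\<lambda>i. d i w) \<partial>J) = 0 \<longleftrightarrow> (AE w in J. qf M K (\<lambda>i. d i w) = 0)"
      using qfint[of d] by (intro integral_nonneg_eq_0_iff_AE) (auto intro: qf_nonneg K)
    also have "\<dots> \<longleftrightarrow> (AE w in J. \<forall>i\<in>{1..M}. a i w = b i w)"
    proof
      assume "AE w in J. qf M K (\<lambda>i. d i w) = 0"
      then show "AE w in J. \<forall>i\<in>{1..M}. a i w = b i w"
        using asum bsum
      proof eventually_elim
        fix w assume h: "qf M K (\<lambda>i. d i w) = 0" "(\<Sum>i\<in>{1..M}. a i w) = 1" "(\<Sum>i\<in>{1..M}. b i w) = 1"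
        have "(\<Sum>i\<in>{1..M}. d i w) = 0" using h(2,3) by (simp add: d_def sum_subtractf)
        then show "\<forall>i\<in>{1..M}. a i w = b i w" using qf_pos[OF K _ h(1)] by (simp add: d_def)
      qed
    next
      assume "AE w in J. \<forall>i\<in>{1..M}. a i w = b i w"
      then show "AE w in J. qf M K (\<lambda>i. d i w) = 0"
        by eventually_elim (simp add: qf_def d_def)
    qed
    also have "\<dots> \<longleftrightarrow> (\<forall>i\<in>{1..M}. AE w in J. a i w = b i w)"
      by (rule AE_ball_countable) auto
    finally show ?thesis .
  qed
  show ?thesis using eq dnn iff by auto
qed


locale setting =
  fixes M :: nat and K :: "nat \<Rightarrow> nat \<Rightarrow> real" and \<pi> :: "nat \<Rightarrow> real"
    and Z :: "'a measure" and Z' :: "'b measure"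
    and \<kappa> :: "'a \<Rightarrow> 'b measure"
    and P :: "nat \<Rightarrow> 'a measure" and Q :: "nat \<Rightarrow> 'b measure"
  assumes M2: "M \<ge> 2"
    and K: "char_kernel M K"
    and pi_pos: "\<forall>i\<in>{1..M}. 0 < \<pi> i \<and> \<pi> i < 1"
    and pi_sum: "(\<Sum>i\<in>{1..M}. \<pi> i) = 1"
    and kappa: "transition_kernel Z Z' \<kappa>"
    and P: "\<forall>i\<in>{1..M}. prob_space (P i) \<and> sets (P i) = sets Z"
    and Q_sets: "\<forall>i\<in>{1..M}. sets (Q i) = sets Z'"
    and Q_def: "\<forall>i\<in>{1..M}. \<forall>B\<in>sets Z'. emeasure (Q i) B = (\<integral>\<^sup>+ z. emeasure (\<kappa> z) B \<partial>P i)"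
begin

lemma M1: "M \<ge> 1" using M2 by simp
lemma pi_pos': "\<forall>i\<in>{1..M}. 0 < \<pi> i" using pi_pos by auto

sublocale mP: mixs M \<pi> Z P
  using M1 P pi_pos' pi_sum by unfold_locales auto

lemma kappa_prob: "z \<in> space Z \<Longrightarrow> prob_space (\<kappa> z)"
  using kappa unfolding transition_kernel_def by auto
lemma kappa_sets: "z \<in> space Z \<Longrightarrow> sets (\<kappa> z) = sets Z'"
  using kappa unfolding transition_kernel_def by auto

lemma kappa_meas[measurable]: "\<kappa> \<in> measurable Z (subprob_algebra Z')"
  using kappa unfolding transition_kernel_def
  by (intro measurable_subprob_algebra) (auto intro: prob_space_imp_subprob_space)

lemma Pi_sets: "i \<in> {1..M} \<Longrightarrow> sets (P i) = sets Z" using P by auto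
lemma Pi_prob: "i \<in> {1..M} \<Longrightarrow> prob_space (P i)" using P by auto
lemma Pi_space: "i \<in> {1..M} \<Longrightarrow> space (P i) = space Z" using Pi_sets sets_eq_imp_space_eq by blast

lemma Q_bind: "i \<in> {1..M} \<Longrightarrow> Q i = P i \<bind> \<kappa>"
proof -
  assume i: "i \<in> {1..M}"
  interpret Pi: prob_space "P i" using Pi_prob[OF i] .
  have km: "\<kappa> \<in> measurable (P i) (subprob_algebra Z')"
    using kappa_meas by (simp add: measurable_cong_sets[OF Pi_sets[OF i] refl])
  have ne: "space (P i) \<noteq> {}" by (rule Pi.not_empty)
  show ?thesis
  proof (rule measure_eqI)
    show "sets (Q i) = sets (P i \<bind> \<kappa>)"
      using Q_sets i kappa_sets Pi_space[OF i] by (subst sets_bind[OF _ ne]) auto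
    fix A assume "A \<in> sets (Q i)"
    then have A: "A \<in> sets Z'" using Q_sets i by auto
    show "emeasure (Q i) A = emeasure (P i \<bind> \<kappa>) A"
      using Q_def i A by (simp add: emeasure_bind[OF ne km A])
  qed
qed

lemma nn_integral_Q:
  assumes i: "i \<in> {1..M}" and g: "g \<in> borel_measurable Z'"
  shows "(\<integral>\<^sup>+z'. g z' \<partial>Q i) = (\<integral>\<^sup>+z. (\<integral>\<^sup>+z'. g z' \<partial>\<kappa> z) \<partial>P i)"
proof -
  have km: "\<kappa> \<in> measurable (P i) (subprob_algebra Z')"
    using kappa_meas by (simp add: measurable_cong_sets[OF Pi_sets[OF i] refl])
  show ?thesis unfolding Q_bind[OF i] by (rule nn_integral_bind[OF g km])
qed

lemma Q_prob: "i \<in> {1..M} \<Longrightarrow> prob_space (Q i)"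
proof -
  assume i: "i \<in> {1..M}"
  interpret Pi: prob_space "P i" using Pi_prob[OF i] .
  have sp: "space (Q i) = space Z'" using Q_sets i sets_eq_imp_space_eq by blast
  show ?thesis
  proof
    have "emeasure (Q i) (space (Q i)) = (\<integral>\<^sup>+ z. emeasure (\<kappa> z) (space Z') \<partial>P i)"
      using Q_def i sp by auto
    also have "\<dots> = (\<integral>\<^sup>+ z. 1 \<partial>P i)"
    proof (rule nn_integral_cong)
      fix z assume "z \<in> space (P i)"
      then have z: "z \<in> space Z" using Pi_space[OF i] by simp
      interpret kz: prob_space "\<kappa> z" using kappa_prob[OF z] .
      have "space (\<kappa> z) = space Z'" using kappa_sets[OF z] sets_eq_imp_space_eq by blast
      then show "emeasure (\<kappa> z) (space Z') = 1" using kz.emeasure_space_1 by simp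
    qed
    also have "\<dots> = 1" by (simp add: Pi.emeasure_space_1)
    finally show "emeasure (Q i) (space (Q i)) = 1" .
  qed
qed

sublocale mQ: mixs M \<pi> Z' Q
  using M1 Q_prob Q_sets pi_pos' pi_sum by unfold_locales auto

abbreviation "N \<equiv> (\<lambda>z. distr (\<kappa> z) (Z \<Otimes>\<^sub>M Z') (\<lambda>z'. (z, z')))"
abbreviation "J \<equiv> joint_law M \<pi> Z Z' P \<kappa>"

lemma J_def': "J = mP.mu \<bind> N" unfolding joint_law_def ..

lemma N_meas[measurable]: "N \<in> measurable Z (subprob_algebra (Z \<Otimes>\<^sub>M Z'))"
proof -
  have "(\<lambda>(z, z'). (z, z')) \<in> measurable (Z \<Otimes>\<^sub>M Z') (Z \<Otimes>\<^sub>M Z')" by simp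
  from measurable_distr2[OF this kappa_meas] show ?thesis by simp
qed

lemma N_meas_mu: "N \<in> measurable mP.mu (subprob_algebra (Z \<Otimes>\<^sub>M Z'))"
  using N_meas by simp

lemma kappa_meas_mu: "\<kappa> \<in> measurable mP.mu (subprob_algebra Z')"
  using kappa_meas by simp

lemma mu_ne: "space mP.mu \<noteq> {}" using mP.mu.not_empty .

lemma sets_J[simp, measurable_cong]: "sets J = sets (Z \<Otimes>\<^sub>M Z')"
  unfolding J_def' using mu_ne by (intro sets_bind) (auto simp: kappa_sets)

lemma meas_J[simp]: "measurable J X = measurable (Z \<Otimes>\<^sub>M Z') X"
  by (rule measurable_cong_sets[OF sets_J refl])

lemma J_prob: "prob_space J"
  unfolding J_def'
proof (rule mP.mu.prob_space_bind[OF _ N_meas_mu])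
  show "AE z in mP.mu. prob_space (N z)"
  proof (rule AE_I2)
    fix z assume "z \<in> space mP.mu"
    then have z: "z \<in> space Z" by simp
    interpret kz: prob_space "\<kappa> z" using kappa_prob[OF z] .
    have "(\<lambda>z'. (z, z')) \<in> measurable (\<kappa> z) (Z \<Otimes>\<^sub>M Z')"
      using measurable_Pair1'[OF z, of Z'] by (simp add: measurable_cong_sets[OF kappa_sets[OF z] refl])
    then show "prob_space (N z)" by (rule kz.prob_space_distr)
  qed
qed

interpretation Jp: prob_space J by (rule J_prob)

lemma Pair_meas: "z \<in> space Z \<Longrightarrow> (\<lambda>z'. (z, z')) \<in> measurable (\<kappa> z) (Z \<Otimes>\<^sub>M Z')"
  using measurable_Pair1'[of z Z Z'] by (simp add: measurable_cong_sets[OF kappa_sets refl])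

lemma distr_fst: "distr J Z fst = mP.mu"
proof -
  have "distr J Z fst = mP.mu \<bind> (\<lambda>z. distr (N z) Z fst)"
    unfolding J_def' by (rule distr_bind[OF N_meas_mu mu_ne]) simp
  also have "\<dots> = mP.mu \<bind> return Z"
  proof (rule bind_cong[OF refl])
    fix z assume "z \<in> space mP.mu"
    then have z: "z \<in> space Z" by simp
    interpret kz: prob_space "\<kappa> z" using kappa_prob[OF z] .
    have "distr (N z) Z fst = distr (\<kappa> z) Z (fst \<circ> (\<lambda>z'. (z, z')))"
      by (rule distr_distr[OF measurable_fst Pair_meas[OF z]])
    also have "\<dots> = distr (\<kappa> z) Z (\<lambda>_. z)" by (simp add: comp_def)
    also have "\<dots> = return Z z" using z by simp
    finally show "distr (N z) Z fst = return Z z" .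
  qed
  also have "\<dots> = mP.mu" by (rule bind_return'') simp
  finally show ?thesis .
qed

lemma nu_bind: "mQ.mu = mP.mu \<bind> \<kappa>"
proof (rule measure_eqI)
  show "sets mQ.mu = sets (mP.mu \<bind> \<kappa>)" using mu_ne by (subst sets_bind) (auto simp: kappa_sets)
  fix B assume "B \<in> sets mQ.mu"
  then have B: "B \<in> sets Z'" by simp
  have "emeasure mQ.mu B = (\<Sum>i\<in>{1..M}. ennreal (\<pi> i) * emeasure (Q i) B)" by (rule mQ.emeasure_mu[OF B])
  also have "\<dots> = (\<Sum>i\<in>{1..M}. ennreal (\<pi> i) * (\<integral>\<^sup>+ z. emeasure (\<kappa> z) B \<partial>P i))"
    using Q_def B by (intro sum.cong) auto
  also have "\<dots> = (\<integral>\<^sup>+ z. emeasure (\<kappa> z) B \<partial>mP.mu)"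
    using B by (intro mP.nn_integral_mu[symmetric]) measurable
  also have "\<dots> = emeasure (mP.mu \<bind> \<kappa>) B"
    by (rule emeasure_bind[OF mu_ne kappa_meas_mu B, symmetric])
  finally show "emeasure mQ.mu B = emeasure (mP.mu \<bind> \<kappa>) B" .
qed

lemma distr_snd: "distr J Z' snd = mQ.mu"
proof -
  have "distr J Z' snd = mP.mu \<bind> (\<lambda>z. distr (N z) Z' snd)"
    unfolding J_def' by (rule distr_bind[OF N_meas_mu mu_ne]) simp
  also have "\<dots> = mP.mu \<bind> \<kappa>"
  proof (rule bind_cong[OF refl])
    fix z assume "z \<in> space mP.mu"
    then have z: "z \<in> space Z" by simp
    have "distr (N z) Z' snd = distr (\<kappa> z) Z' (snd \<circ> (\<lambda>z'. (z, z')))"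
      by (rule distr_distr[OF measurable_snd Pair_meas[OF z]])
    also have "\<dots> = distr (\<kappa> z) Z' (\<lambda>z'. z')" by (simp add: comp_def)
    also have "\<dots> = \<kappa> z" using kappa_sets[OF z] by (intro distr_id2) simp
    finally show "distr (N z) Z' snd = \<kappa> z" .
  qed
  also have "\<dots> = mQ.mu" by (rule nu_bind[symmetric])
  finally show ?thesis .
qed

lemma nn_integral_J:
  assumes h: "h \<in> borel_measurable (Z \<Otimes>\<^sub>M Z')"
  shows "(\<integral>\<^sup>+w. h w \<partial>J) = (\<integral>\<^sup>+z. (\<integral>\<^sup>+z'. h (z, z') \<partial>\<kappa> z) \<partial>mP.mu)"
proof -
  have "(\<integral>\<^sup>+w. h w \<partial>J) = (\<integral>\<^sup>+z. (\<integral>\<^sup>+w. h w \<partial>N z) \<partial>mP.mu)"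
    unfolding J_def' by (rule nn_integral_bind[OF h N_meas_mu])
  also have "\<dots> = (\<integral>\<^sup>+z. (\<integral>\<^sup>+z'. h (z, z') \<partial>\<kappa> z) \<partial>mP.mu)"
  proof (rule nn_integral_cong)
    fix z assume "z \<in> space mP.mu"
    then have z: "z \<in> space Z" by simp
    show "(\<integral>\<^sup>+w. h w \<partial>N z) = (\<integral>\<^sup>+z'. h (z, z') \<partial>\<kappa> z)"
      using h by (intro nn_integral_distr[OF Pair_meas[OF z]]) simp
  qed
  finally show ?thesis .
qed

end


lemma denom_pos:
  assumes K: "char_kernel M K" and M1: "M \<ge> 1"
    and pi_pos: "\<forall>i\<in>{1..M}. 0 < \<pi> i \<and> \<pi> i < 1"
    and pi_sum: "(\<Sum>i\<in>{1..M}. \<pi> i) = 1"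
  shows "(\<Sum>i\<in>{1..M}. \<Sum>j\<in>{1..M}. \<pi> i * \<pi> j * K i j) < (\<Sum>i\<in>{1..M}. \<pi> i * K i i)"
proof -
  define cr where "cr = (\<Sum>i\<in>{1..M}. \<Sum>j\<in>{1..M}. \<pi> i * \<pi> j * K i j)"
  define e where "e k i = (if i = k then 1 else 0) - \<pi> i" for k i :: nat
  have qfe: "qf M K (e k) = K k k - (\<Sum>j\<in>{1..M}. \<pi> j * K k j) - (\<Sum>i\<in>{1..M}. \<pi> i * K i k) + cr"
    if k: "k \<in> {1..M}" for k
  proof -
    define L where "L i = K i k - (\<Sum>j\<in>{1..M}. \<pi> j * K i j)" for i
    have d1: "(\<Sum>j\<in>{1..M}. (if j = k then K i j else 0)) = K i k" for i using k by simp
    have inner: "(\<Sum>j\<in>{1..M}. K i j * e k i * e k j) = e k i * L i" for i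
    proof -
      have "(\<Sum>j\<in>{1..M}. K i j * e k i * e k j)
          = (\<Sum>j\<in>{1..M}. e k i * (if j = k then K i j else 0) - e k i * (\<pi> j * K i j))"
        by (intro sum.cong refl) (auto simp: e_def algebra_simps)
      also have "\<dots> = e k i * L i"
        using k by (simp add: sum_subtractf sum_distrib_left[symmetric] d1 L_def right_diff_distrib)
      finally show ?thesis .
    qed
    have "qf M K (e k) = (\<Sum>i\<in>{1..M}. e k i * L i)"
      unfolding qf_def by (rule sum.cong[OF refl inner])
    also have "\<dots> = (\<Sum>i\<in>{1..M}. (if i = k then L i else 0) - \<pi> i * L i)"
      by (intro sum.cong refl) (auto simp: e_def algebra_simps)
    also have "\<dots> = L k - (\<Sum>i\<in>{1..M}. \<pi> i * L i)"
      using k by (simp add: sum_subtractf)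
    also have "(\<Sum>i\<in>{1..M}. \<pi> i * L i) = (\<Sum>i\<in>{1..M}. \<pi> i * K i k) - cr"
      unfolding L_def cr_def by (simp add: right_diff_distrib sum_subtractf sum_distrib_left mult.assoc)
    also have "L k = K k k - (\<Sum>j\<in>{1..M}. \<pi> j * K k j)" unfolding L_def ..
    finally show ?thesis by simp
  qed
  have pos: "0 < qf M K (e k)" if k: "k \<in> {1..M}" for k
  proof -
    have "(\<Sum>i\<in>{1..M}. e k i) = 0" using k pi_sum by (simp add: e_def sum_subtractf)
    moreover have "\<pi> k < 1" using pi_pos k by blast
    then have "e k k \<noteq> 0" by (auto simp: e_def)
    ultimately show ?thesis
      using K k unfolding char_kernel_def qf_alt by blast
  qed
  have "0 < (\<Sum>k\<in>{1..M}. \<pi> k * qf M K (e k))"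
  proof (rule sum_pos)
    show "{1..M} \<noteq> {}" using M1 by simp
  qed (use pos pi_pos in auto)
  also have "\<dots> = (\<Sum>k\<in>{1..M}. \<pi> k * K k k) - (\<Sum>k\<in>{1..M}. \<Sum>j\<in>{1..M}. \<pi> k * \<pi> j * K k j)
       - (\<Sum>k\<in>{1..M}. \<Sum>i\<in>{1..M}. \<pi> k * \<pi> i * K i k) + (\<Sum>k\<in>{1..M}. \<pi> k) * cr"
    by (simp add: qfe algebra_simps sum.distrib sum_subtractf sum_distrib_left sum_distrib_right)
  also have "(\<Sum>k\<in>{1..M}. \<Sum>i\<in>{1..M}. \<pi> k * \<pi> i * K i k) = cr"
    unfolding cr_def by (subst sum.swap) (simp add: ac_simps)
  also have "(\<Sum>k\<in>{1..M}. \<Sum>j\<in>{1..M}. \<pi> k * \<pi> j * K k j) = cr" unfolding cr_def ..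
  finally show ?thesis using pi_sum unfolding cr_def by simp
qed


context setting begin

definition "aa i w = mP.p i (fst w)"
definition "bb i w = mQ.p i (snd w)"

lemma fst_meas: "fst \<in> measurable J Z" by simp
lemma snd_meas: "snd \<in> measurable J Z'" by simp

lemma aa_meas: "aa i \<in> borel_measurable J"
  unfolding aa_def using measurable_compose[OF fst_meas mP.p_meas] .
lemma bb_meas: "bb i \<in> borel_measurable J"
  unfolding bb_def using measurable_compose[OF snd_meas mQ.p_meas] .

lemma AE_fst: "AE z in mP.mu. R z \<Longrightarrow> AE w in J. R (fst w)"
proof -
  assume "AE z in mP.mu. R z"
  then have "AE z in distr J Z fst. R z" by (simp only: distr_fst)
  then show ?thesis by (rule AE_distrD[OF fst_meas])
qed
lemma AE_snd: "AE z in mQ.mu. R z \<Longrightarrow> AE w in J. R (snd w)"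
proof -
  assume "AE z in mQ.mu. R z"
  then have "AE z in distr J Z' snd. R z" by (simp only: distr_snd)
  then show ?thesis by (rule AE_distrD[OF snd_meas])
qed

lemma pm[measurable]: "mP.p i \<in> borel_measurable Z" by (rule mP.p_meas)
lemma qm[measurable]: "mQ.p i \<in> borel_measurable Z'" by (rule mQ.p_meas)

lemma aa_bd: "\<forall>i\<in>{1..M}. AE w in J. 0 \<le> aa i w \<and> aa i w \<le> 1"
proof
  fix i assume i: "i \<in> {1..M}"
  show "AE w in J. 0 \<le> aa i w \<and> aa i w \<le> 1"
    unfolding aa_def by (rule AE_fst) (use mP.p_le1[OF i] mP.p_nonneg[OF i] in auto)
qed
lemma bb_bd: "\<forall>i\<in>{1..M}. AE w in J. 0 \<le> bb i w \<and> bb i w \<le> 1"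
proof
  fix i assume i: "i \<in> {1..M}"
  show "AE w in J. 0 \<le> bb i w \<and> bb i w \<le> 1"
    unfolding bb_def by (rule AE_snd) (use mQ.p_le1[OF i] mQ.p_nonneg[OF i] in auto)
qed
lemma aa_sum: "AE w in J. (\<Sum>i\<in>{1..M}. aa i w) = 1"
  unfolding aa_def by (rule AE_fst) (rule mP.p_sum)
lemma bb_sum: "AE w in J. (\<Sum>i\<in>{1..M}. bb i w) = 1"
  unfolding bb_def by (rule AE_snd) (rule mQ.p_sum)

lemma kq_meas: "(\<lambda>z. \<integral>\<^sup>+z'. g z' \<partial>\<kappa> z) \<in> borel_measurable Z" if "g \<in> borel_measurable Z'"
  using measurable_compose[OF kappa_meas nn_integral_measurable_subprob_algebra[OF that]] .

lemma cross_nn: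
  assumes i: "i \<in> {1..M}" and j: "j \<in> {1..M}"
  shows "(\<integral>\<^sup>+w. ennreal (aa i w * bb j w) \<partial>J) = (\<integral>\<^sup>+w. ennreal (bb i w * bb j w) \<partial>J)"
proof -
  let ?q = "\<lambda>z'. ennreal (mQ.p j z')"
  have qm: "?q \<in> borel_measurable Z'" by simp
  have "(\<integral>\<^sup>+w. ennreal (aa i w * bb j w) \<partial>J)
      = (\<integral>\<^sup>+z. (\<integral>\<^sup>+z'. ennreal (mP.p i z * mQ.p j z') \<partial>\<kappa> z) \<partial>mP.mu)"
    unfolding aa_def bb_def by (subst nn_integral_J) simp_all
  also have "\<dots> = (\<integral>\<^sup>+z. ennreal (mP.p i z) * (\<integral>\<^sup>+z'. ?q z' \<partial>\<kappa> z) \<partial>mP.mu)"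
  proof (rule nn_integral_cong)
    fix z assume "z \<in> space mP.mu"
    then have z: "z \<in> space Z" by simp
    have "?q \<in> borel_measurable (\<kappa> z)"
      using qm by (simp add: measurable_cong_sets[OF kappa_sets[OF z] refl])
    then show "(\<integral>\<^sup>+z'. ennreal (mP.p i z * mQ.p j z') \<partial>\<kappa> z) = ennreal (mP.p i z) * (\<integral>\<^sup>+z'. ?q z' \<partial>\<kappa> z)"
      using mP.p_nonneg[OF i] mQ.p_nonneg[OF j]
      by (subst nn_integral_cmult[symmetric]) (auto simp: ennreal_mult intro!: nn_integral_cong)
  qed
  also have "\<dots> = ennreal (\<pi> i) * (\<integral>\<^sup>+z. (\<integral>\<^sup>+z'. ?q z' \<partial>\<kappa> z) \<partial>P i)"
    by (rule mP.nn_integral_p[OF i kq_meas[OF qm]])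
  also have "(\<integral>\<^sup>+z. (\<integral>\<^sup>+z'. ?q z' \<partial>\<kappa> z) \<partial>P i) = (\<integral>\<^sup>+z'. ?q z' \<partial>Q i)"
    by (rule nn_integral_Q[OF i qm, symmetric])
  also have "ennreal (\<pi> i) * (\<integral>\<^sup>+z'. ?q z' \<partial>Q i) = (\<integral>\<^sup>+z'. ennreal (mQ.p i z') * ?q z' \<partial>mQ.mu)"
    by (rule mQ.nn_integral_p[OF i qm, symmetric])
  also have "\<dots> = (\<integral>\<^sup>+z'. ennreal (mQ.p i z' * mQ.p j z') \<partial>distr J Z' snd)"
    unfolding distr_snd using mQ.p_nonneg[OF i] mQ.p_nonneg[OF j]
    by (intro nn_integral_cong) (simp add: ennreal_mult)
  also have "\<dots> = (\<integral>\<^sup>+w. ennreal (bb i w * bb j w) \<partial>J)"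
    unfolding bb_def by (rule nn_integral_distr[OF snd_meas]) simp
  finally show ?thesis .
qed

lemma cross:
  "\<forall>i\<in>{1..M}. \<forall>j\<in>{1..M}. (\<integral>w. aa i w * bb j w \<partial>J) = (\<integral>w. bb i w * bb j w \<partial>J)"
proof (intro ballI)
  fix i j assume i: "i \<in> {1..M}" and j: "j \<in> {1..M}"
  have nn: "\<And>w. 0 \<le> aa i w * bb j w" "\<And>w. 0 \<le> bb i w * bb j w"
    unfolding aa_def bb_def using mP.p_nonneg[OF i] mQ.p_nonneg[OF i] mQ.p_nonneg[OF j] by auto
  have ae: "AE w in J. 0 \<le> aa i w * bb j w" "AE w in J. 0 \<le> bb i w * bb j w"
    by (rule AE_I2, rule nn(1)) (rule AE_I2, rule nn(2))
  have "(\<integral>w. aa i w * bb j w \<partial>J) = enn2real (\<integral>\<^sup>+w. ennreal (aa i w * bb j w) \<partial>J)"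
    using ae aa_meas bb_meas by (intro integral_eq_nn_integral) auto
  also have "\<dots> = enn2real (\<integral>\<^sup>+w. ennreal (bb i w * bb j w) \<partial>J)" by (simp add: cross_nn[OF i j])
  also have "\<dots> = (\<integral>w. bb i w * bb j w \<partial>J)"
    using ae aa_meas bb_meas by (intro integral_eq_nn_integral[symmetric]) auto
  finally show "(\<integral>w. aa i w * bb j w \<partial>J) = (\<integral>w. bb i w * bb j w \<partial>J)" .
qed

lemma core_app:
  "(\<integral>w. qf M K (\<lambda>i. bb i w) \<partial>J) \<le> (\<integral>w. qf M K (\<lambda>i. aa i w) \<partial>J)
    \<and> ((\<integral>w. qf M K (\<lambda>i. aa i w) \<partial>J) = (\<integral>w. qf M K (\<lambda>i. bb i w) \<partial>J)
          \<longleftrightarrow> (\<forall>i\<in>{1..M}. AE w in J. aa i w = bb i w))"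
  by (rule core[OF J_prob K _ _ aa_bd bb_bd aa_sum bb_sum cross]) (use aa_meas bb_meas in simp_all)

lemma same_P: "(\<integral>z. qf M K (\<lambda>i. mP.p i z) \<partial>mP.mu) = (\<integral>w. qf M K (\<lambda>i. aa i w) \<partial>J)"
proof -
  have m: "(\<lambda>z. qf M K (\<lambda>i. mP.p i z)) \<in> borel_measurable Z" unfolding qf_def by measurable
  show ?thesis unfolding aa_def
    by (subst distr_fst[symmetric]) (rule integral_distr[OF fst_meas m])
qed

lemma same_Q: "(\<integral>z. qf M K (\<lambda>i. mQ.p i z) \<partial>mQ.mu) = (\<integral>w. qf M K (\<lambda>i. bb i w) \<partial>J)"
proof -
  have m: "(\<lambda>z. qf M K (\<lambda>i. mQ.p i z)) \<in> borel_measurable Z'" unfolding qf_def by measurable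
  show ?thesis unfolding bb_def
    by (subst distr_snd[symmetric]) (rule integral_distr[OF snd_meas m])
qed

lemma kmd_eq: "kmd M K \<pi> X R = ((\<integral>z. qf M K (\<lambda>i. posterior M \<pi> X R i z) \<partial>mixture M \<pi> X R)
   - (\<Sum>i\<in>{1..M}. \<Sum>j\<in>{1..M}. \<pi> i * \<pi> j * K i j))
  / ((\<Sum>i\<in>{1..M}. \<pi> i * K i i) - (\<Sum>i\<in>{1..M}. \<Sum>j\<in>{1..M}. \<pi> i * \<pi> j * K i j))"
  unfolding kmd_def qf_def Let_def ..

lemma main:
  "kmd M K \<pi> Z P \<ge> kmd M K \<pi> Z' Q
    \<and> (kmd M K \<pi> Z P = kmd M K \<pi> Z' Q \<longleftrightarrow>
         (\<forall>i\<in>{1..M}. AE w in J. mP.p i (fst w) = mQ.p i (snd w)))"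
proof -
  let ?c = "(\<Sum>i\<in>{1..M}. \<Sum>j\<in>{1..M}. \<pi> i * \<pi> j * K i j)"
  let ?d = "(\<Sum>i\<in>{1..M}. \<pi> i * K i i)"
  have dpos: "0 < ?d - ?c" using denom_pos[OF K M1 pi_pos pi_sum] by simp
  let ?A = "(\<integral>w. qf M K (\<lambda>i. aa i w) \<partial>J)" and ?B = "(\<integral>w. qf M K (\<lambda>i. bb i w) \<partial>J)"
  have kP: "kmd M K \<pi> Z P = (?A - ?c) / (?d - ?c)" unfolding kmd_eq same_P ..
  have kQ: "kmd M K \<pi> Z' Q = (?B - ?c) / (?d - ?c)" unfolding kmd_eq same_Q ..
  have "(?B - ?c) / (?d - ?c) \<le> (?A - ?c) / (?d - ?c)"
    using core_app dpos by (intro divide_right_mono) auto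
  moreover have "(?A - ?c) / (?d - ?c) = (?B - ?c) / (?d - ?c) \<longleftrightarrow> ?A = ?B"
    using dpos by (auto simp: field_simps)
  ultimately show ?thesis unfolding kP kQ using core_app by (auto simp: aa_def bb_def)
qed

end


lemma det_ineq:
  fixes M :: nat and K :: "nat \<Rightarrow> nat \<Rightarrow> real" and \<pi> :: "nat \<Rightarrow> real"
    and Z :: "'a measure" and Z' :: "'b measure" and P :: "nat \<Rightarrow> 'a measure" and T :: "'a \<Rightarrow> 'b"
  assumes M2: "M \<ge> 2"
    and K: "char_kernel M K"
    and pi_pos: "\<forall>i\<in>{1..M}. 0 < \<pi> i \<and> \<pi> i < 1"
    and pi_sum: "(\<Sum>i\<in>{1..M}. \<pi> i) = 1"
    and P: "\<forall>i\<in>{1..M}. prob_space (P i) \<and> sets (P i) = sets Z"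
    and T: "T \<in> Z \<rightarrow>\<^sub>M Z'"
  shows "kmd M K \<pi> Z' (\<lambda>i. distr (P i) Z' T) \<le> kmd M K \<pi> Z P"
proof -
  have ret: "emeasure (return Z' (T z)) B = indicator B (T z)" if "B \<in> sets Z'" for z B
    using that by simp
  have tk: "transition_kernel Z Z' (\<lambda>z. return Z' (T z))"
    unfolding transition_kernel_def
  proof (intro conjI ballI)
    fix z assume "z \<in> space Z"
    then have "T z \<in> space Z'" using T by (simp add: measurable_space)
    then show "prob_space (return Z' (T z))" by (rule prob_space_return)
    show "sets (return Z' (T z)) = sets Z'" by simp
  next
    fix B assume B: "B \<in> sets Z'"
    have "(\<lambda>z. indicator B (T z) :: ennreal) \<in> borel_measurable Z" using T B by measurable
    then show "(\<lambda>z. emeasure (return Z' (T z)) B) \<in> borel_measurable Z" using B by simp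
  qed
  have qd: "\<forall>i\<in>{1..M}. \<forall>B\<in>sets Z'. emeasure (distr (P i) Z' T) B = (\<integral>\<^sup>+ z. emeasure (return Z' (T z)) B \<partial>P i)"
  proof (intro ballI)
    fix i B assume i: "i \<in> {1..M}" and B: "B \<in> sets Z'"
    have Ti: "T \<in> measurable (P i) Z'" using T P i by (simp add: measurable_cong_sets[of "P i" Z])
    have "emeasure (distr (P i) Z' T) B = (\<integral>\<^sup>+ y. indicator B y \<partial>distr (P i) Z' T)"
      using B by simp
    also have "\<dots> = (\<integral>\<^sup>+ z. indicator B (T z) \<partial>P i)"
      using B by (intro nn_integral_distr[OF Ti]) simp
    also have "\<dots> = (\<integral>\<^sup>+ z. emeasure (return Z' (T z)) B \<partial>P i)"
      using B by simp
    finally show "emeasure (distr (P i) Z' T) B = (\<integral>\<^sup>+ z. emeasure (return Z' (T z)) B \<partial>P i)" .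
  qed
  interpret setting M K \<pi> Z Z' "\<lambda>z. return Z' (T z)" P "\<lambda>i. distr (P i) Z' T"
    using M2 K pi_pos pi_sum tk P qd by unfold_locales auto
  show ?thesis using main by simp
qed

lemma kmd_cong:
  assumes "\<forall>i\<in>{1..M}. R i = R' i"
  shows "kmd M K \<pi> X R = kmd M K \<pi> X R'"
proof -
  have mx: "mixture M \<pi> X R = mixture M \<pi> X R'"
    unfolding mixture_def using assms by (metis (no_types, lifting) sum.cong)
  have pp: "posterior M \<pi> X R i = posterior M \<pi> X R' i" if "i \<in> {1..M}" for i
    unfolding posterior_def mx using assms that by simp
  have "(\<lambda>z. \<Sum>i\<in>{1..M}. \<Sum>j\<in>{1..M}. K i j * posterior M \<pi> X R i z * posterior M \<pi> X R j z)
      = (\<lambda>z. \<Sum>i\<in>{1..M}. \<Sum>j\<in>{1..M}. K i j * posterior M \<pi> X R' i z * posterior M \<pi> X R' j z)"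
    by (intro ext sum.cong refl) (simp add: pp)
  then show ?thesis unfolding kmd_def mx by simp
qed

theorem proposition2:
  fixes M :: nat and K :: "nat \<Rightarrow> nat \<Rightarrow> real" and \<pi> :: "nat \<Rightarrow> real"
    and Z :: "'a measure" and Z' :: "'b measure"
    and \<kappa> :: "'a \<Rightarrow> 'b measure"
    and P :: "nat \<Rightarrow> 'a measure" and Q :: "nat \<Rightarrow> 'b measure"
  assumes M2: "M \<ge> 2"
    and K: "char_kernel M K"
    and pi_pos: "\<forall>i\<in>{1..M}. 0 < \<pi> i \<and> \<pi> i < 1"
    and pi_sum: "(\<Sum>i\<in>{1..M}. \<pi> i) = 1"
    and kappa: "transition_kernel Z Z' \<kappa>"
    and P: "\<forall>i\<in>{1..M}. prob_space (P i) \<and> sets (P i) = sets Z"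
    and Q_sets: "\<forall>i\<in>{1..M}. sets (Q i) = sets Z'"
    and Q_def: "\<forall>i\<in>{1..M}. \<forall>B\<in>sets Z'. emeasure (Q i) B = (\<integral>\<^sup>+ z. emeasure (\<kappa> z) B \<partial>P i)"
  shows "kmd M K \<pi> Z P \<ge> kmd M K \<pi> Z' Q
    \<and> (kmd M K \<pi> Z P = kmd M K \<pi> Z' Q \<longleftrightarrow>
         (\<forall>i\<in>{1..M}. AE w in joint_law M \<pi> Z Z' P \<kappa>.
             posterior M \<pi> Z P i (fst w) = posterior M \<pi> Z' Q i (snd w)))
    \<and> (\<forall>T. T \<in> Z \<rightarrow>\<^sub>M Z' \<and> bij_betw T (space Z) (space Z')
             \<and> the_inv_into (space Z) T \<in> Z' \<rightarrow>\<^sub>M Z \<longrightarrow>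
           kmd M K \<pi> Z P = kmd M K \<pi> Z' (\<lambda>i. distr (P i) Z' T))"
proof -
  interpret setting M K \<pi> Z Z' \<kappa> P Q
    using assms by unfold_locales auto
  have third: "kmd M K \<pi> Z P = kmd M K \<pi> Z' (\<lambda>i. distr (P i) Z' T)"
    if T: "T \<in> Z \<rightarrow>\<^sub>M Z'" and bij: "bij_betw T (space Z) (space Z')"
      and Ti: "the_inv_into (space Z) T \<in> Z' \<rightarrow>\<^sub>M Z" for T
  proof -
    let ?T' = "the_inv_into (space Z) T"
    let ?P' = "\<lambda>i. distr (P i) Z' T"
    have 1: "kmd M K \<pi> Z' ?P' \<le> kmd M K \<pi> Z P"
      by (rule det_ineq[OF M2 K pi_pos pi_sum P T])
    have P': "\<forall>i\<in>{1..M}. prob_space (?P' i) \<and> sets (?P' i) = sets Z'"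
    proof
      fix i assume i: "i \<in> {1..M}"
      interpret Pi: prob_space "P i" using P i by auto
      have "T \<in> measurable (P i) Z'" using T P i by (simp add: measurable_cong_sets[of "P i" Z])
      then show "prob_space (?P' i) \<and> sets (?P' i) = sets Z'" by (simp add: Pi.prob_space_distr)
    qed
    have 2: "kmd M K \<pi> Z (\<lambda>i. distr (?P' i) Z ?T') \<le> kmd M K \<pi> Z' ?P'"
      by (rule det_ineq[OF M2 K pi_pos pi_sum P' Ti])
    have 3: "kmd M K \<pi> Z (\<lambda>i. distr (?P' i) Z ?T') = kmd M K \<pi> Z P"
    proof (rule kmd_cong, intro ballI)
      fix i assume i: "i \<in> {1..M}"
      have sP: "sets (P i) = sets Z" using P i by auto
      have spP: "space (P i) = space Z" using sets_eq_imp_space_eq[OF sP] .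
      have Tm: "T \<in> measurable (P i) Z'" using T by (simp add: measurable_cong_sets[OF sP refl])
      have "distr (?P' i) Z ?T' = distr (P i) Z (?T' \<circ> T)"
        by (rule distr_distr[OF Ti Tm])
      also have "\<dots> = distr (P i) Z (\<lambda>x. x)"
      proof (rule distr_cong[OF refl refl])
        fix x assume "x \<in> space (P i)"
        then have "x \<in> space Z" using spP by simp
        then show "(?T' \<circ> T) x = x"
          using bij by (simp add: bij_betw_def the_inv_into_f_f)
      qed
      also have "\<dots> = P i" by (rule distr_id2[OF sP[symmetric]])
      finally show "distr (?P' i) Z ?T' = P i" .
    qed
    show ?thesis using 1 2 3 by simp
  qed
  show ?thesis using main third by blast
qed


end
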